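(* Let $\mathbb{R}^n$ carry a norm $\|\cdot\|$ with dual norm $\|\cdot\|_*$, let $Q\subseteq\mathbb{R}^n$ be closed and convex, let $f_1,\dots,f_M$ be convex functions on $Q$, differentiable with $\|\nabla f_i(x)-\nabla f_i(y)\|_*\le L\|x-y\|$ for all $x,y\in Q$, and let $h$ be convex on $Q$. Put $f(x)=\max_{i=1,\dots,M}f_i(x)+h(x)$ and assume $f$ attains its minimum over $Q$ at $x_*$. Let $d$ be a prox-function on $Q$ with Bregman divergence $V$, $x_0\in Q$, $V(x_*,x_0)\le R^2$. Run the adaptive mirror triangle method for the minimax problem (described in the context) with starting point $x_0$, an integer $N\ge1$ of steps, and initial constant $L_0$ with $0<L_0\le L$. Then $$f(x_N)-f(x_* )\le\frac{8LR^2}{(N+1)^2}.$$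
   Context: $\|\lambda\|_*=\max_{\|\nu\|\le1}\langle\lambda,\nu\rangle$. A prox-function on $Q$ is a continuously differentiable $d:Q\to\mathbb{R}$, $1$-strongly convex w.r.t. $\|\cdot\|$; $V(x,y)=d(x)-d(y)-\langle\nabla d(y),x-y\rangle$. The adaptive method: set $y_0=u_0=x_0$, $L_1=L_0/2$, $\alpha_0=A_0=0$. Step $k+1$ ($k=0,\dots,N-1$), with current value $L_{k+1}$: (i) let $\alpha_{k+1}$ be the largest root of $A_k+\alpha=L_{k+1}\alpha^2$, and $A_{k+1}=A_k+\alpha_{k+1}$; (ii) $y_{k+1}=(\alpha_{k+1}u_k+A_kx_k)/A_{k+1}$; (iii) $u_{k+1}=\arg\min_{x\in Q}\{V(x,u_k)+\alpha_{k+1}(\max_{j}[f_j(y_{k+1})+\langle\nabla f_j(y_{k+1}),x-y_{k+1}\rangle]+h(x))\}$; (iv) $x_{k+1}=(\alpha_{k+1}u_{k+1}+A_kx_k)/A_{k+1}$; (v) if $f(x_{k+1})\le\max_j\{f_j(y_{k+1})+\langle\nabla f_j(y_{k+1}),x_{k+1}-y_{k+1}\rangle\}+\frac{L_{k+1}}{2}\|x_{k+1}-y_{k+1}\|^2+h(x_{k+1})$, set $L_{k+2}=L_{k+1}/2$ and go to the next step; otherwise replace $L_{k+1}$ by $2L_{k+1}$ and repeat step $k+1$ from (i). *)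

theory Defs
  imports "HOL-Analysis.Analysis"
begin

definition is_norm :: "('a::euclidean_space \<Rightarrow> real) \<Rightarrow> bool" where
  "is_norm nrm \<longleftrightarrow> (\<forall>x. nrm x = 0 \<longleftrightarrow> x = 0) \<and> (\<forall>c x. nrm (c *\<^sub>R x) = \<bar>c\<bar> * nrm x)
     \<and> (\<forall>x y. nrm (x + y) \<le> nrm x + nrm y)"

definition dual_norm :: "('a::euclidean_space \<Rightarrow> real) \<Rightarrow> 'a \<Rightarrow> real" where
  "dual_norm nrm l = Sup ((\<lambda>v. l \<bullet> v) ` {v. nrm v \<le> 1})"

definition prox_function :: "('a::euclidean_space \<Rightarrow> real) \<Rightarrow> 'a set \<Rightarrow> ('a \<Rightarrow> real) \<Rightarrow> ('a \<Rightarrow> 'a) \<Rightarrow> bool" where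
  "prox_function nrm Q d gd \<longleftrightarrow>
     (\<forall>x\<in>Q. (d has_derivative (\<lambda>v. gd x \<bullet> v)) (at x within Q)) \<and> continuous_on Q gd \<and>
     (\<forall>x\<in>Q. \<forall>y\<in>Q. \<forall>t\<in>{0..1}.
        d (t *\<^sub>R x + (1 - t) *\<^sub>R y) \<le> t * d x + (1 - t) * d y - t * (1 - t) / 2 * (nrm (x - y))\<^sup>2)"

definition bregman :: "('a::euclidean_space \<Rightarrow> real) \<Rightarrow> ('a \<Rightarrow> 'a) \<Rightarrow> 'a \<Rightarrow> 'a \<Rightarrow> real" where
  "bregman d gd x y = d x - d y - gd y \<bullet> (x - y)"

definition is_argmin_on :: "'a set \<Rightarrow> ('a \<Rightarrow> real) \<Rightarrow> 'a \<Rightarrow> bool" where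
  "is_argmin_on Q F u \<longleftrightarrow> u \<in> Q \<and> (\<forall>x\<in>Q. F u \<le> F x)"

definition lin_max :: "nat \<Rightarrow> (nat \<Rightarrow> 'a::euclidean_space \<Rightarrow> real) \<Rightarrow> (nat \<Rightarrow> 'a \<Rightarrow> 'a) \<Rightarrow> 'a \<Rightarrow> 'a \<Rightarrow> real" where
  "lin_max M f g y x = Max ((\<lambda>j. f j y + g j y \<bullet> (x - y)) ` {1..M})"

definition obj :: "nat \<Rightarrow> (nat \<Rightarrow> 'a \<Rightarrow> real) \<Rightarrow> ('a \<Rightarrow> real) \<Rightarrow> 'a \<Rightarrow> real" where
  "obj M f h x = Max ((\<lambda>i. f i x) ` {1..M}) + h x"

text \<open>Largest root of A + a = Lt * a^2 (Lt > 0).\<close>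
definition alpha_of :: "real \<Rightarrow> real \<Rightarrow> real" where
  "alpha_of Lt A = (1 + sqrt (1 + 4 * Lt * A)) / (2 * Lt)"

definition mtm_step ::
  "'a::euclidean_space set \<Rightarrow> nat \<Rightarrow> (nat \<Rightarrow> 'a \<Rightarrow> real) \<Rightarrow> (nat \<Rightarrow> 'a \<Rightarrow> 'a) \<Rightarrow> ('a \<Rightarrow> real)
   \<Rightarrow> ('a \<Rightarrow> 'a \<Rightarrow> real) \<Rightarrow> real \<Rightarrow> real \<Rightarrow> 'a \<Rightarrow> 'a
   \<Rightarrow> real \<Rightarrow> real \<Rightarrow> 'a \<Rightarrow> 'a \<Rightarrow> 'a \<Rightarrow> bool" where
  "mtm_step Q M f g h V Lt Ak xk uk a A' y' u' x' \<longleftrightarrow>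
     a = alpha_of Lt Ak \<and> A' = Ak + a \<and>
     y' = (1 / A') *\<^sub>R (a *\<^sub>R uk + Ak *\<^sub>R xk) \<and>
     is_argmin_on Q (\<lambda>z. V z uk + a * (lin_max M f g y' z + h z)) u' \<and>
     x' = (1 / A') *\<^sub>R (a *\<^sub>R u' + Ak *\<^sub>R xk)"

definition mtm_accept ::
  "('a::euclidean_space \<Rightarrow> real) \<Rightarrow> nat \<Rightarrow> (nat \<Rightarrow> 'a \<Rightarrow> real) \<Rightarrow> (nat \<Rightarrow> 'a \<Rightarrow> 'a) \<Rightarrow> ('a \<Rightarrow> real)
   \<Rightarrow> real \<Rightarrow> 'a \<Rightarrow> 'a \<Rightarrow> bool" where
  "mtm_accept nrm M f g h Lt y' x' \<longleftrightarrow>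
     obj M f h x' \<le> lin_max M f g y' x' + Lt / 2 * (nrm (x' - y'))\<^sup>2 + h x'"

text \<open>Lk 0 = L0 and
  Lk (k+1) is the accepted constant of step k+1; the first trial constant of step k+1
  is Lk k / 2 (so L_1 = L0/2, L_{k+2} = L_{k+1}/2), doubled m times until acceptance;
  all earlier trials (j < m) are carried out (minimizer exists) and rejected.\<close>
definition mtm_run ::
  "('a::euclidean_space \<Rightarrow> real) \<Rightarrow> 'a set \<Rightarrow> nat \<Rightarrow> (nat \<Rightarrow> 'a \<Rightarrow> real) \<Rightarrow> (nat \<Rightarrow> 'a \<Rightarrow> 'a)
   \<Rightarrow> ('a \<Rightarrow> real) \<Rightarrow> ('a \<Rightarrow> 'a \<Rightarrow> real) \<Rightarrow> 'a \<Rightarrow> real \<Rightarrow> nat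
   \<Rightarrow> (nat \<Rightarrow> 'a) \<Rightarrow> (nat \<Rightarrow> 'a) \<Rightarrow> (nat \<Rightarrow> 'a) \<Rightarrow> (nat \<Rightarrow> real) \<Rightarrow> (nat \<Rightarrow> real) \<Rightarrow> (nat \<Rightarrow> real)
   \<Rightarrow> bool" where
  "mtm_run nrm Q M f g h V x0 L0 N x y u A alpha Lk \<longleftrightarrow>
     x 0 = x0 \<and> y 0 = x0 \<and> u 0 = x0 \<and> A 0 = 0 \<and> alpha 0 = 0 \<and> Lk 0 = L0 \<and>
     (\<forall>k<N. \<exists>m::nat.
        Lk (Suc k) = Lk k / 2 * 2 ^ m \<and>
        mtm_step Q M f g h V (Lk (Suc k)) (A k) (x k) (u k)
          (alpha (Suc k)) (A (Suc k)) (y (Suc k)) (u (Suc k)) (x (Suc k)) \<and>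
        mtm_accept nrm M f g h (Lk (Suc k)) (y (Suc k)) (x (Suc k)) \<and>
        (\<forall>j<m. (\<exists>a A' y' u' x'. mtm_step Q M f g h V (Lk k / 2 * 2 ^ j) (A k) (x k) (u k) a A' y' u' x') \<and>
               (\<forall>a A' y' u' x'. mtm_step Q M f g h V (Lk k / 2 * 2 ^ j) (A k) (x k) (u k) a A' y' u' x'
                   \<longrightarrow> \<not> mtm_accept nrm M f g h (Lk k / 2 * 2 ^ j) y' x')))"

end

theory Submission
  imports Defs
begin

lemma nrm_scale: "is_norm nrm \<Longrightarrow> nrm (c *\<^sub>R x) = \<bar>c\<bar> * nrm x"
  unfolding is_norm_def by blast
lemma nrm_tri: "is_norm nrm \<Longrightarrow> nrm (x + y) \<le> nrm x + nrm y"
  unfolding is_norm_def by blast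
lemma nrm_zero: "is_norm nrm \<Longrightarrow> nrm x = 0 \<longleftrightarrow> x = 0"
  unfolding is_norm_def by blast
lemma nrm_nonneg: assumes "is_norm nrm" shows "nrm x \<ge> 0"
proof -
  have "nrm (x + (-1) *\<^sub>R x) \<le> nrm x + nrm ((-1) *\<^sub>R x)" using nrm_tri[OF assms] .
  moreover have "nrm ((-1) *\<^sub>R x) = nrm x" using nrm_scale[OF assms, of "-1" x] by simp
  moreover have "nrm (x + (-1) *\<^sub>R x) = 0" using nrm_zero[OF assms] by simp
  ultimately show ?thesis by linarith
qed

lemma nrm_upper: assumes "is_norm (nrm::'a::euclidean_space \<Rightarrow> real)"
  shows "nrm x \<le> (\<Sum>b\<in>Basis. nrm b) * norm x"
proof -
  have "nrm x = nrm (\<Sum>b\<in>Basis. (x \<bullet> b) *\<^sub>R b)" by (simp add: euclidean_representation)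
  also have "\<dots> \<le> (\<Sum>b\<in>Basis. nrm ((x \<bullet> b) *\<^sub>R b))"
  proof (induction rule: finite_induct[OF finite_Basis])
    case 1 then show ?case using nrm_zero[OF assms, of 0] by simp
  next
    case (2 b F) then show ?case using nrm_tri[OF assms, of "(x \<bullet> b) *\<^sub>R b" "\<Sum>b\<in>F. (x \<bullet> b) *\<^sub>R b"] by simp
  qed
  also have "\<dots> = (\<Sum>b\<in>Basis. \<bar>x \<bullet> b\<bar> * nrm b)" using nrm_scale[OF assms] by simp
  also have "\<dots> \<le> (\<Sum>b\<in>Basis. norm x * nrm b)"
    by (intro sum_mono mult_right_mono) (auto simp: Basis_le_norm nrm_nonneg[OF assms])
  finally show ?thesis by (simp add: sum_distrib_left mult.commute)
qed

lemma nrm_cont: assumes "is_norm (nrm::'a::euclidean_space \<Rightarrow> real)"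
  shows "continuous_on S nrm"
proof -
  define C where "C = (\<Sum>b\<in>Basis. nrm (b::'a))"
  have C0: "C \<ge> 0" unfolding C_def by (intro sum_nonneg) (simp add: nrm_nonneg[OF assms])
  have lip: "\<bar>nrm x - nrm y\<bar> \<le> C * norm (x - y)" for x y
  proof -
    have "nrm x \<le> nrm y + nrm (x - y)" using nrm_tri[OF assms, of y "x - y"] by simp
    moreover have "nrm y \<le> nrm x + nrm (y - x)" using nrm_tri[OF assms, of x "y - x"] by simp
    moreover have "nrm (y - x) = nrm (x - y)" using nrm_scale[OF assms, of "-1" "x - y"] by simp
    ultimately show ?thesis using nrm_upper[OF assms, of "x - y"] unfolding C_def by linarith
  qed
  have "C-lipschitz_on S nrm"
    by (rule lipschitz_onI) (use lip C0 in \<open>auto simp: dist_real_def dist_norm\<close>)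
  then show ?thesis by (rule lipschitz_on_continuous_on)
qed

lemma nrm_lower: assumes "is_norm (nrm::'a::euclidean_space \<Rightarrow> real)"
  shows "\<exists>c>0. \<forall>v. c * norm v \<le> nrm v"
proof -
  have ne: "sphere (0::'a) 1 \<noteq> {}"
  proof -
    obtain b :: 'a where "b \<in> Basis" using nonempty_Basis by blast
    then show ?thesis by (auto simp: sphere_def intro!: exI[of _ b])
  qed
  obtain w where w: "w \<in> sphere (0::'a) 1" "\<forall>y\<in>sphere 0 1. nrm w \<le> nrm y"
    using continuous_attains_inf[OF compact_sphere ne nrm_cont[OF assms]] by blast
  have "w \<noteq> 0" using w by auto
  then have c0: "nrm w > 0" using nrm_zero[OF assms, of w] nrm_nonneg[OF assms, of w] by linarith
  have "nrm w * norm v \<le> nrm v" for v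
  proof (cases "v = 0")
    case True then show ?thesis using nrm_nonneg[OF assms, of v] by simp
  next
    case False
    then have "(1 / norm v) *\<^sub>R v \<in> sphere 0 1" by auto
    then have "nrm w \<le> nrm ((1 / norm v) *\<^sub>R v)" using w by blast
    also have "\<dots> = nrm v / norm v" using nrm_scale[OF assms] by simp
    finally show ?thesis using False by (simp add: field_simps)
  qed
  then show ?thesis using c0 by blast
qed

lemma dual_pair: assumes "is_norm (nrm::'a::euclidean_space \<Rightarrow> real)"
  shows "l \<bullet> v \<le> dual_norm nrm l * nrm v"
proof -
  obtain c where c: "c > 0" "\<And>v. c * norm v \<le> nrm v" using nrm_lower[OF assms] by blast
  have bdd: "bdd_above ((\<lambda>v. l \<bullet> v) ` {v. nrm v \<le> 1})"
  proof (rule bdd_aboveI2)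
    fix w assume "w \<in> {v. nrm v \<le> 1}"
    then have "c * norm w \<le> 1" using c(2)[of w] by simp
    then have "norm w \<le> 1 / c" using c(1) by (simp add: field_simps)
    then have "norm l * norm w \<le> norm l * (1 / c)" by (intro mult_left_mono) auto
    then show "l \<bullet> w \<le> norm l / c" using Cauchy_Schwarz_ineq2[of l w] by simp
  qed
  show ?thesis
  proof (cases "v = 0")
    case True
    have "0 \<in> {v. nrm v \<le> 1}" using nrm_zero[OF assms, of 0] by simp
    then have "l \<bullet> 0 \<in> (\<lambda>v. l \<bullet> v) ` {v. nrm v \<le> 1}" by (rule imageI)
    then have "l \<bullet> 0 \<le> dual_norm nrm l" unfolding dual_norm_def by (intro cSup_upper bdd)
    then show ?thesis using True nrm_zero[OF assms, of 0] by simp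
  next
    case False
    then have n0: "nrm v > 0" using nrm_zero[OF assms, of v] nrm_nonneg[OF assms, of v] by linarith
    have "nrm ((1 / nrm v) *\<^sub>R v) = 1" using nrm_scale[OF assms, of "1 / nrm v" v] n0 by simp
    then have "(1 / nrm v) *\<^sub>R v \<in> {v. nrm v \<le> 1}" by simp
    then have "l \<bullet> ((1 / nrm v) *\<^sub>R v) \<in> (\<lambda>v. l \<bullet> v) ` {v. nrm v \<le> 1}" by (rule imageI)
    then have "l \<bullet> ((1 / nrm v) *\<^sub>R v) \<le> dual_norm nrm l"
      unfolding dual_norm_def by (intro cSup_upper bdd)
    then show ?thesis using n0 by (simp add: field_simps)
  qed
qed

lemma line_in: "convex Q \<Longrightarrow> x \<in> Q \<Longrightarrow> y \<in> Q \<Longrightarrow> t \<in> {0..1} \<Longrightarrow> y + t *\<^sub>R (x - y) \<in> Q"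
proof -
  assume a: "convex Q" "x \<in> Q" "y \<in> Q" "t \<in> {0..1}"
  have "y + t *\<^sub>R (x - y) = (1 - t) *\<^sub>R y + t *\<^sub>R x" by (simp add: algebra_simps)
  then show ?thesis using a convexD_alt[of Q y x t] by auto
qed

lemma line_deriv:
  assumes Q: "convex Q" "x \<in> Q" "y \<in> Q" and t: "t \<in> {0..1}"
    and D: "(F has_derivative (\<lambda>v. gz \<bullet> v)) (at (y + t *\<^sub>R (x - y)) within Q)"
  shows "((\<lambda>s. F (y + s *\<^sub>R (x - y))) has_derivative (\<lambda>s. s * (gz \<bullet> (x - y)))) (at t within {0..1})"
proof -
  have l: "((\<lambda>s. y + s *\<^sub>R (x - y)) has_derivative (\<lambda>s. s *\<^sub>R (x - y))) (at t within {0..1})"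
    by (auto intro!: derivative_eq_intros)
  have sub: "(\<lambda>s. y + s *\<^sub>R (x - y)) ` {0..1} \<subseteq> Q" using line_in[OF Q(1,2,3)] by auto
  have D': "(F has_derivative (\<lambda>v. gz \<bullet> v)) (at ((\<lambda>s. y + s *\<^sub>R (x - y)) t) within (\<lambda>s. y + s *\<^sub>R (x - y)) ` {0..1})"
    using has_derivative_subset[OF D sub] by simp
  show ?thesis using diff_chain_within[OF l D'] by (simp add: o_def)
qed

lemma ev01: "(\<And>t. 0 < t \<Longrightarrow> t < 1 \<Longrightarrow> P t) \<Longrightarrow> eventually P (at_right (0::real))"
  using eventually_mono[OF eventually_at_right_real[of 0 1]] by auto

lemma dir_lim:
  assumes Q: "convex Q" "x \<in> Q" "y \<in> Q"
    and D: "(F has_derivative (\<lambda>v. gy \<bullet> v)) (at y within Q)"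
  shows "((\<lambda>t. (F (y + t *\<^sub>R (x - y)) - F y) / t) \<longlongrightarrow> gy \<bullet> (x - y)) (at_right 0)"
proof -
  have D1: "((\<lambda>s. F (y + s *\<^sub>R (x - y))) has_derivative (\<lambda>s. s * (gy \<bullet> (x - y)))) (at 0 within {0..1})"
    using line_deriv[OF Q, of 0 F gy] D by simp
  have "((\<lambda>s. F (y + s *\<^sub>R (x - y))) has_field_derivative (gy \<bullet> (x - y))) (at 0 within {0..1})"
  proof -
    have e: "(\<lambda>s. s * (gy \<bullet> (x - y))) = (*) (gy \<bullet> (x - y))" by (rule ext) simp
    show ?thesis using D1 unfolding has_field_derivative_def e .
  qed
  then have "((\<lambda>s. (F (y + s *\<^sub>R (x - y)) - F y) / (s - 0)) \<longlongrightarrow> gy \<bullet> (x - y)) (at 0 within {0..1})"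
    unfolding has_field_derivative_iff by simp
  then show ?thesis using at_within_Icc_at_right[of "0::real" 1] by simp
qed

lemma grad_ineq:
  assumes Q: "x \<in> Q" "y \<in> Q" and cv: "convex_on Q F"
    and D: "(F has_derivative (\<lambda>v. gy \<bullet> v)) (at y within Q)"
  shows "F y + gy \<bullet> (x - y) \<le> F x"
proof -
  have cQ: "convex Q" using cv convex_on_def by blast
  have ev: "\<forall>\<^sub>F t in at_right 0. (F (y + t *\<^sub>R (x - y)) - F y) / t \<le> F x - F y"
  proof (rule ev01)
      fix t :: real assume t0: "0 < t" and t1: "t < 1"
      have t: "0 < t \<and> t < 1" using t0 t1 by simp
      have "y + t *\<^sub>R (x - y) = (1 - t) *\<^sub>R y + t *\<^sub>R x" by (simp add: algebra_simps)
      then have "F (y + t *\<^sub>R (x - y)) \<le> (1 - t) * F y + t * F x"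
        using convex_onD[OF cv, of t y x] t Q by simp
      then show "(F (y + t *\<^sub>R (x - y)) - F y) / t \<le> F x - F y"
        using t by (simp add: field_simps)
  qed
  have "gy \<bullet> (x - y) \<le> F x - F y"
    by (rule tendsto_le[OF trivial_limit_at_right_real tendsto_const dir_lim[OF cQ Q(1,2) D] ev])
  then show ?thesis by simp
qed

lemma prox_deriv: "prox_function nrm Q d gd \<Longrightarrow> y \<in> Q \<Longrightarrow> (d has_derivative (\<lambda>v. gd y \<bullet> v)) (at y within Q)"
  unfolding prox_function_def by blast

lemma strong:
  assumes P: "prox_function nrm Q d gd" and cQ: "convex Q" and Q: "x \<in> Q" "y \<in> Q"
  shows "(nrm (x - y))\<^sup>2 / 2 \<le> bregman d gd x y"
proof -
  have sc: "\<forall>x\<in>Q. \<forall>y\<in>Q. \<forall>t\<in>{0..1}.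
        d (t *\<^sub>R x + (1 - t) *\<^sub>R y) \<le> t * d x + (1 - t) * d y - t * (1 - t) / 2 * (nrm (x - y))\<^sup>2"
    using P unfolding prox_function_def by blast
  have ev: "\<forall>\<^sub>F t in at_right 0. (d (y + t *\<^sub>R (x - y)) - d y) / t \<le> d x - d y - (1 - t) / 2 * (nrm (x - y))\<^sup>2"
  proof (rule ev01)
    fix t :: real assume t: "0 < t" "t < 1"
    have "y + t *\<^sub>R (x - y) = t *\<^sub>R x + (1 - t) *\<^sub>R y" by (simp add: algebra_simps)
    then have "d (y + t *\<^sub>R (x - y)) \<le> t * d x + (1 - t) * d y - t * (1 - t) / 2 * (nrm (x - y))\<^sup>2"
      using sc Q t by auto
    then show "(d (y + t *\<^sub>R (x - y)) - d y) / t \<le> d x - d y - (1 - t) / 2 * (nrm (x - y))\<^sup>2"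
      using t by (simp add: field_simps)
  qed
  have lim2: "((\<lambda>t. d x - d y - (1 - t) / 2 * (nrm (x - y))\<^sup>2) \<longlongrightarrow> d x - d y - (1 - 0) / 2 * (nrm (x - y))\<^sup>2) (at_right 0)"
    by (intro tendsto_intros) simp_all
  have "gd y \<bullet> (x - y) \<le> d x - d y - (1 - 0) / 2 * (nrm (x - y))\<^sup>2"
    by (rule tendsto_le[OF trivial_limit_at_right_real lim2 dir_lim[OF cQ Q prox_deriv[OF P Q(2)]] ev])
  then show ?thesis unfolding bregman_def by simp
qed

lemma opt:
  assumes P: "prox_function nrm Q d gd" and cQ: "convex Q" and Q: "x \<in> Q" "uk \<in> Q"
    and a: "a \<ge> 0" and cv: "convex_on Q psi"
    and am: "is_argmin_on Q (\<lambda>z. bregman d gd z uk + a * psi z) u'"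
  shows "a * psi u' + bregman d gd u' uk + bregman d gd x u' \<le> a * psi x + bregman d gd x uk"
proof -
  have u': "u' \<in> Q" and mn: "\<And>z. z \<in> Q \<Longrightarrow> bregman d gd u' uk + a * psi u' \<le> bregman d gd z uk + a * psi z"
    using am unfolding is_argmin_on_def by auto
  have ev: "\<forall>\<^sub>F t in at_right 0. gd uk \<bullet> (x - u') - a * (psi x - psi u') \<le> (d (u' + t *\<^sub>R (x - u')) - d u') / t"
  proof (rule ev01)
    fix t :: real assume t: "0 < t" "t < 1"
    define z where "z = u' + t *\<^sub>R (x - u')"
    have zQ: "z \<in> Q" unfolding z_def using line_in[OF cQ Q(1) u', of t] t by auto
    have "z = (1 - t) *\<^sub>R u' + t *\<^sub>R x" unfolding z_def by (simp add: algebra_simps)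
    then have pz: "psi z \<le> (1 - t) * psi u' + t * psi x" using convex_onD[OF cv, of t u' x] t Q u' by simp
    have "bregman d gd u' uk + a * psi u' \<le> bregman d gd z uk + a * psi z" using mn[OF zQ] .
    then have "0 \<le> d z - d u' - gd uk \<bullet> (z - u') + a * (psi z - psi u')"
      unfolding bregman_def by (simp add: inner_diff_right algebra_simps)
    moreover have "gd uk \<bullet> (z - u') = t * (gd uk \<bullet> (x - u'))" unfolding z_def by simp
    moreover have "a * (psi z - psi u') \<le> a * (t * (psi x - psi u'))"
      using pz a by (intro mult_left_mono) (auto simp: algebra_simps)
    ultimately have "t * (gd uk \<bullet> (x - u') - a * (psi x - psi u')) \<le> d z - d u'"
      by (simp add: algebra_simps)
    then show "gd uk \<bullet> (x - u') - a * (psi x - psi u') \<le> (d (u' + t *\<^sub>R (x - u')) - d u') / t"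
      using t unfolding z_def by (simp add: field_simps)
  qed
  have "gd uk \<bullet> (x - u') - a * (psi x - psi u') \<le> gd u' \<bullet> (x - u')"
    by (rule tendsto_le[OF trivial_limit_at_right_real dir_lim[OF cQ Q(1) u' prox_deriv[OF P u']] tendsto_const ev])
  then show ?thesis unfolding bregman_def by (simp add: inner_diff_right algebra_simps)
qed


lemma descent:
  assumes nm: "is_norm nrm" and cQ: "convex Q" and Q: "x \<in> Q" "y \<in> Q" and L: "L \<ge> 0"
    and der: "\<And>z. z \<in> Q \<Longrightarrow> (F has_derivative (\<lambda>v. G z \<bullet> v)) (at z within Q)"
    and lip: "\<And>z. z \<in> Q \<Longrightarrow> dual_norm nrm (G z - G y) \<le> L * nrm (z - y)"
  shows "F x \<le> F y + G y \<bullet> (x - y) + L / 2 * (nrm (x - y))\<^sup>2"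
proof -
  define v where "v = x - y"
  define n where "n = nrm v"
  define psi where "psi s = F (y + s *\<^sub>R v) - s * (G y \<bullet> v) - L / 2 * s\<^sup>2 * n\<^sup>2" for s
  define ps' where "ps' t = (\<lambda>s::real. s * (G (y + t *\<^sub>R v) \<bullet> v) - s * (G y \<bullet> v) - s * (L * t * n\<^sup>2))" for t
  have dv: "(psi has_derivative ps' t) (at t within {0..1})" if t: "0 \<le> t" "t \<le> 1" for t
  proof -
    have d1: "((\<lambda>s. F (y + s *\<^sub>R v)) has_derivative (\<lambda>s. s * (G (y + t *\<^sub>R v) \<bullet> v))) (at t within {0..1})"
      unfolding v_def by (rule line_deriv[OF cQ Q]) (use t der line_in[OF cQ Q, of t] in auto)
    have d2: "((\<lambda>s. s * (G y \<bullet> v)) has_derivative (\<lambda>s. s * (G y \<bullet> v))) (at t within {0..1})"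
      by (auto intro!: derivative_eq_intros)
    have d3: "((\<lambda>s. L / 2 * s\<^sup>2 * n\<^sup>2) has_derivative (\<lambda>s. s * (L * t * n\<^sup>2))) (at t within {0..1})"
      by (auto intro!: derivative_eq_intros simp: algebra_simps power2_eq_square)
    show ?thesis unfolding psi_def[abs_def] ps'_def
      by (rule has_derivative_diff[OF has_derivative_diff[OF d1 d2] d3])
  qed
  obtain t where t: "t \<in> {0..1}" and mv: "psi 1 - psi 0 = ps' t (1 - 0)"
    using mvt_very_simple[of 0 1 psi ps'] dv by force
  have tz: "y + t *\<^sub>R v \<in> Q" using line_in[OF cQ Q t] unfolding v_def .
  have "(G (y + t *\<^sub>R v) - G y) \<bullet> v \<le> dual_norm nrm (G (y + t *\<^sub>R v) - G y) * n"
    unfolding n_def by (rule dual_pair[OF nm])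
  also have "\<dots> \<le> L * nrm (t *\<^sub>R v) * n"
    using lip[OF tz] nrm_nonneg[OF nm, of v] unfolding n_def by (intro mult_right_mono) auto
  also have "nrm (t *\<^sub>R v) = t * n" using nrm_scale[OF nm, of t v] t unfolding n_def by simp
  finally have "(G (y + t *\<^sub>R v) - G y) \<bullet> v \<le> L * t * n\<^sup>2" by (simp add: power2_eq_square algebra_simps)
  then have "psi 1 - psi 0 \<le> 0" using mv unfolding ps'_def by (simp add: inner_diff_left)
  then show ?thesis unfolding psi_def v_def n_def by simp
qed


lemma fin_ne: "M \<ge> 1 \<Longrightarrow> finite ((\<lambda>i. F i) ` {1..M::nat}) \<and> (\<lambda>i. F i) ` {1..M} \<noteq> {}"
  by auto

lemma lin_max_ge: "M \<ge> 1 \<Longrightarrow> j \<in> {1..M} \<Longrightarrow> f j y + g j y \<bullet> (x - y) \<le> lin_max M f g y x"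
  unfolding lin_max_def by (rule Max_ge) auto

lemma lin_max_le:
  assumes "M \<ge> 1" "\<And>j. j \<in> {1..M} \<Longrightarrow> f j y + g j y \<bullet> (x - y) \<le> c"
  shows "lin_max M f g y x \<le> c"
  unfolding lin_max_def using assms by (subst Max_le_iff) auto

lemma maxf_ge: "(M::nat) \<ge> 1 \<Longrightarrow> j \<in> {1..M} \<Longrightarrow> f j x \<le> Max ((\<lambda>i. f i x) ` {1..M})"
  by (rule Max_ge) auto

lemma maxf_le: "(M::nat) \<ge> 1 \<Longrightarrow> (\<And>j. j \<in> {1..M} \<Longrightarrow> f j x \<le> c) \<Longrightarrow> Max ((\<lambda>i. f i x) ` {1..M}) \<le> c"
  by (subst Max_le_iff) auto

lemma lin_le_f:
  assumes M: "M \<ge> 1" and Q: "x \<in> Q" "y \<in> Q"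
    and fconv: "\<And>i. i \<in> {1..M} \<Longrightarrow> convex_on Q (f i)"
    and fdiff: "\<And>i x. i \<in> {1..M} \<Longrightarrow> x \<in> Q \<Longrightarrow> (f i has_derivative (\<lambda>v. g i x \<bullet> v)) (at x within Q)"
  shows "lin_max M f g y x \<le> Max ((\<lambda>i. f i x) ` {1..M})"
proof (rule lin_max_le[OF M])
  fix j assume j: "j \<in> {1..M}"
  have "f j y + g j y \<bullet> (x - y) \<le> f j x" by (rule grad_ineq[OF Q fconv[OF j] fdiff[OF j Q(2)]])
  also have "\<dots> \<le> Max ((\<lambda>i. f i x) ` {1..M})" by (rule maxf_ge[OF M j])
  finally show "f j y + g j y \<bullet> (x - y) \<le> Max ((\<lambda>i. f i x) ` {1..M})" .
qed

lemma lin_max_convex: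
  assumes M: "M \<ge> 1" and cQ: "convex Q" and hconv: "convex_on Q h"
  shows "convex_on Q (\<lambda>z. lin_max M f g y z + h z)"
proof -
  have "convex_on Q (lin_max M f g y)"
    unfolding convex_on_def
  proof (intro conjI cQ ballI allI impI)
    fix a b u v :: real and p q assume pq: "p \<in> Q" "q \<in> Q" and uv: "0 \<le> u" "0 \<le> v" "u + v = 1"
    show "lin_max M f g y (u *\<^sub>R p + v *\<^sub>R q) \<le> u * lin_max M f g y p + v * lin_max M f g y q"
    proof (rule lin_max_le[OF M])
      fix j assume j: "j \<in> {1..M}"
      have e: "f j y + g j y \<bullet> (u *\<^sub>R p + v *\<^sub>R q - y) = u * (f j y + g j y \<bullet> (p - y)) + v * (f j y + g j y \<bullet> (q - y))"
      proof -
        have vv: "v = 1 - u" using uv(3) by simp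
        show ?thesis unfolding vv by (simp add: algebra_simps inner_add_right inner_diff_right)
      qed
      show "f j y + g j y \<bullet> (u *\<^sub>R p + v *\<^sub>R q - y) \<le> u * lin_max M f g y p + v * lin_max M f g y q"
        unfolding e using lin_max_ge[OF M j, of f y g] uv
        by (intro add_mono mult_left_mono) auto
    qed
  qed
  then show ?thesis using convex_on_add hconv by blast
qed

lemma accept_if:
  assumes nm: "is_norm nrm" and M: "M \<ge> 1" and cQ: "convex Q" and Q: "x' \<in> Q" "y' \<in> Q"
    and L: "L \<ge> 0" "L \<le> Lt"
    and fdiff: "\<And>i x. i \<in> {1..M} \<Longrightarrow> x \<in> Q \<Longrightarrow> (f i has_derivative (\<lambda>v. g i x \<bullet> v)) (at x within Q)"
    and flip: "\<And>i x z. i \<in> {1..M} \<Longrightarrow> x \<in> Q \<Longrightarrow> z \<in> Q \<Longrightarrow>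
                 dual_norm nrm (g i x - g i z) \<le> L * nrm (x - z)"
  shows "mtm_accept nrm M f g h Lt y' x'"
proof -
  have "Max ((\<lambda>i. f i x') ` {1..M}) \<le> lin_max M f g y' x' + Lt / 2 * (nrm (x' - y'))\<^sup>2"
  proof (rule maxf_le[OF M])
    fix j assume j: "j \<in> {1..M}"
    have "f j x' \<le> f j y' + g j y' \<bullet> (x' - y') + L / 2 * (nrm (x' - y'))\<^sup>2"
      by (rule descent[OF nm cQ Q L(1)]) (use fdiff[OF j] flip[OF j _ Q(2)] in auto)
    also have "\<dots> \<le> lin_max M f g y' x' + Lt / 2 * (nrm (x' - y'))\<^sup>2"
      using lin_max_ge[OF M j, of f y' g x'] L by (intro add_mono mult_right_mono) auto
    finally show "f j x' \<le> lin_max M f g y' x' + Lt / 2 * (nrm (x' - y'))\<^sup>2" .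
  qed
  then show ?thesis unfolding mtm_accept_def obj_def by linarith
qed

lemma alpha_props:
  assumes "Lt > 0" "A \<ge> 0"
  shows "alpha_of Lt A \<ge> 1 / Lt" "Lt * (alpha_of Lt A)\<^sup>2 = A + alpha_of Lt A"
proof -
  define S where "S = sqrt (1 + 4 * Lt * A)"
  have S1: "S \<ge> 1" unfolding S_def using assms by simp
  have S2: "S\<^sup>2 = 1 + 4 * Lt * A" unfolding S_def using assms by simp
  show "alpha_of Lt A \<ge> 1 / Lt" unfolding alpha_of_def S_def[symmetric] using assms S1
    by (simp add: field_simps)
  show "Lt * (alpha_of Lt A)\<^sup>2 = A + alpha_of Lt A" unfolding alpha_of_def S_def[symmetric] using assms S2
    by (simp add: field_simps power2_eq_square)
qed

lemma growth:
  assumes Lt: "Lt > 0" "Lt \<le> 2 * L" and A: "A \<ge> 0" "A \<ge> (c\<^sup>2 - 1) / (8 * L)" and c: "c \<ge> 1"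
  shows "A + alpha_of Lt A \<ge> (c + 1)\<^sup>2 / (8 * L)"
proof -
  define a where "a = alpha_of Lt A"
  define b where "b = (1 + c) / (4 * L)"
  have L0: "L > 0" using Lt by simp
  have a1: "a \<ge> 1 / Lt" and a2: "Lt * a\<^sup>2 = A + a" using alpha_props[OF Lt(1) A(1)] unfolding a_def by auto
  have b0: "b > 0" unfolding b_def using L0 c by simp
  have pb: "Lt * b\<^sup>2 - b \<le> (c\<^sup>2 - 1) / (8 * L)"
  proof -
    have "Lt * b\<^sup>2 \<le> 2 * L * b\<^sup>2" using Lt by (intro mult_right_mono) auto
    moreover have "2 * L * b\<^sup>2 - b = (c\<^sup>2 - 1) / (8 * L)" unfolding b_def using L0
      by (simp add: field_simps power2_eq_square)
    ultimately show ?thesis by linarith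
  qed
  have ab: "a \<ge> b"
  proof (rule ccontr)
    assume "\<not> a \<ge> b"
    then have lt: "a < b" by simp
    have "Lt * a \<ge> 1" using a1 Lt by (simp add: field_simps)
    moreover have "Lt * b > 0" using Lt b0 by simp
    ultimately have "Lt * (b + a) > 1" by (simp add: distrib_left)
    then have "(b - a) * (Lt * (b + a) - 1) > 0" using lt by simp
    moreover have "(b - a) * (Lt * (b + a) - 1) = (Lt * b\<^sup>2 - b) - (Lt * a\<^sup>2 - a)"
      by (simp add: algebra_simps power2_eq_square)
    ultimately show False using pb a2 A by linarith
  qed
  have "(c + 1)\<^sup>2 / (8 * L) = (c\<^sup>2 - 1) / (8 * L) + b" unfolding b_def using L0
    by (simp add: field_simps power2_eq_square)
  then show ?thesis using ab A unfolding a_def by linarith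
qed


lemma step_basic:
  assumes st: "mtm_step Q M f g h V Lt Ak xk uk a A' y' u' x'"
    and Lt: "Lt > 0" and Ak: "Ak \<ge> 0" and cQ: "convex Q" and Q: "xk \<in> Q" "uk \<in> Q"
  shows "a > 0 \<and> A' > 0 \<and> A' = Ak + a \<and> Lt * a\<^sup>2 = A' \<and> y' \<in> Q \<and> u' \<in> Q \<and> x' \<in> Q
    \<and> y' = (a / A') *\<^sub>R uk + (Ak / A') *\<^sub>R xk \<and> x' = (a / A') *\<^sub>R u' + (Ak / A') *\<^sub>R xk
    \<and> is_argmin_on Q (\<lambda>z. V z uk + a * (lin_max M f g y' z + h z)) u'"
proof -
  have a: "a = alpha_of Lt Ak" and A': "A' = Ak + a"
    and y': "y' = (1 / A') *\<^sub>R (a *\<^sub>R uk + Ak *\<^sub>R xk)"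
    and am: "is_argmin_on Q (\<lambda>z. V z uk + a * (lin_max M f g y' z + h z)) u'"
    and x': "x' = (1 / A') *\<^sub>R (a *\<^sub>R u' + Ak *\<^sub>R xk)"
    using st unfolding mtm_step_def by auto
  have a1: "a \<ge> 1 / Lt" and a2: "Lt * a\<^sup>2 = Ak + a" using alpha_props[OF Lt Ak] a by auto
  have a0: "a > 0" using a1 Lt by (smt (verit) divide_pos_pos)
  have A0: "A' > 0" using A' a0 Ak by simp
  have u': "u' \<in> Q" using am unfolding is_argmin_on_def by simp
  have y'': "y' = (a / A') *\<^sub>R uk + (Ak / A') *\<^sub>R xk" unfolding y' by (simp add: scaleR_add_right)
  have x'': "x' = (a / A') *\<^sub>R u' + (Ak / A') *\<^sub>R xk" unfolding x' by (simp add: scaleR_add_right)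
  have sum1: "a / A' + Ak / A' = 1" using A0 A' by (simp add: add_divide_distrib[symmetric])
  have "y' \<in> Q" unfolding y'' by (rule convexD[OF cQ Q(2) Q(1)]) (use a0 A0 Ak sum1 in auto)
  moreover have "x' \<in> Q" unfolding x'' by (rule convexD[OF cQ u' Q(1)]) (use a0 A0 Ak sum1 in auto)
  ultimately show ?thesis using a0 A0 A' a2 u' y'' x'' am by auto
qed

lemma step_ineq:
  assumes norm: "is_norm nrm"
    and cQ: "convex Q"
    and M: "M \<ge> 1"
    and fconv: "\<And>i. i \<in> {1..M} \<Longrightarrow> convex_on Q (f i)"
    and fdiff: "\<And>i x. i \<in> {1..M} \<Longrightarrow> x \<in> Q \<Longrightarrow> (f i has_derivative (\<lambda>v. g i x \<bullet> v)) (at x within Q)"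
    and hconv: "convex_on Q h"
    and xs: "xs \<in> Q"
    and prox: "prox_function nrm Q d gd"
    and st: "mtm_step Q M f g h (bregman d gd) Lt Ak xk uk a A' y' u' x'"
    and acc: "mtm_accept nrm M f g h Lt y' x'"
    and Lt: "Lt > 0" and Ak: "Ak \<ge> 0" and Q: "xk \<in> Q" "uk \<in> Q"
  shows "A' * obj M f h x' + bregman d gd xs u' \<le> Ak * obj M f h xk + a * obj M f h xs + bregman d gd xs uk"
proof -
  note B = step_basic[OF st Lt Ak cQ Q]
  have a0: "a > 0" and A0: "A' > 0" and A': "A' = Ak + a" and La: "Lt * a\<^sup>2 = A'"
    and y'Q: "y' \<in> Q" and u'Q: "u' \<in> Q" and x'Q: "x' \<in> Q"
    and y': "y' = (a / A') *\<^sub>R uk + (Ak / A') *\<^sub>R xk" and x': "x' = (a / A') *\<^sub>R u' + (Ak / A') *\<^sub>R xk"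
    and am: "is_argmin_on Q (\<lambda>z. bregman d gd z uk + a * (lin_max M f g y' z + h z)) u'"
    using B by auto
  define psi where "psi z = lin_max M f g y' z + h z" for z
  define nu where "nu = nrm (u' - uk)"
  define t where "t = a / A'"
  have t1: "1 - t = Ak / A'" unfolding t_def using A0 A' by (simp add: field_simps)
  have t01: "0 \<le> t" "t \<le> 1" using a0 A0 Ak t1 unfolding t_def by (auto simp: field_simps)
  have cvpsi: "convex_on Q psi" unfolding psi_def[abs_def] by (rule lin_max_convex[OF M cQ hconv])
  have ha: "obj M f h x' \<le> psi x' + Lt / 2 * (nrm (x' - y'))\<^sup>2"
    using acc unfolding mtm_accept_def psi_def by simp
  have "x' = (1 - t) *\<^sub>R xk + t *\<^sub>R u'" unfolding x' t1 by (simp add: t_def)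
  then have "psi x' \<le> (1 - t) * psi xk + t * psi u'" using convex_onD[OF cvpsi t01 Q(1) u'Q] by simp
  then have "A' * psi x' \<le> A' * ((1 - t) * psi xk + t * psi u')" using A0 by simp
  also have "\<dots> = Ak * psi xk + a * psi u'" proof -
    have "A' * (1 - a / A') = Ak" using A0 A' by (simp add: field_simps)
    then show ?thesis unfolding t_def using A0 by (simp add: distrib_left)
  qed
  finally have hb: "A' * psi x' \<le> Ak * psi xk + a * psi u'" .
  have hc: "psi xk \<le> obj M f h xk"
    using lin_le_f[OF M Q(1) y'Q fconv fdiff] unfolding psi_def obj_def by simp
  have hf: "psi xs \<le> obj M f h xs"
    using lin_le_f[OF M xs y'Q fconv fdiff] unfolding psi_def obj_def by simp
  have "x' - y' = t *\<^sub>R (u' - uk)" unfolding x' y' t_def by (simp add: algebra_simps)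
  then have "nrm (x' - y') = t * nu" using nrm_scale[OF norm, of t "u' - uk"] t01 unfolding nu_def by simp
  then have nn: "nrm (x' - y') = a / A' * nu" unfolding t_def .
  have "A' * (Lt / 2 * (a / A' * nu)\<^sup>2) = (Lt * a\<^sup>2) / A' * nu\<^sup>2 / 2"
    using A0 by (simp add: field_simps power2_eq_square)
  then have "A' * (Lt / 2 * (nrm (x' - y'))\<^sup>2) = (Lt * a\<^sup>2) / A' * nu\<^sup>2 / 2" unfolding nn .
  then have hd: "A' * (Lt / 2 * (nrm (x' - y'))\<^sup>2) = nu\<^sup>2 / 2" unfolding La using A0 by simp
  have he: "a * psi u' + bregman d gd u' uk + bregman d gd xs u' \<le> a * psi xs + bregman d gd xs uk"
    by (rule opt[OF prox cQ xs Q(2) _ cvpsi]) (use a0 am in \<open>auto simp: psi_def\<close>)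
  have hs: "nu\<^sup>2 / 2 \<le> bregman d gd u' uk" unfolding nu_def by (rule strong[OF prox cQ u'Q Q(2)])
  have "A' * obj M f h x' \<le> A' * psi x' + A' * (Lt / 2 * (nrm (x' - y'))\<^sup>2)"
    using mult_left_mono[OF ha, of A'] A0 by (simp add: distrib_left)
  also have "\<dots> \<le> Ak * obj M f h xk + a * psi u' + nu\<^sup>2 / 2"
    using hb hd hc Ak mult_left_mono[OF hc Ak] by linarith
  finally show ?thesis using he hs hf mult_left_mono[OF hf, of a] a0 by linarith
qed


theorem theorem2:
  fixes nrm :: "'a::euclidean_space \<Rightarrow> real"
    and Q :: "'a set" and M :: nat
    and f :: "nat \<Rightarrow> 'a \<Rightarrow> real" and g :: "nat \<Rightarrow> 'a \<Rightarrow> 'a" and h :: "'a \<Rightarrow> real"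
    and d :: "'a \<Rightarrow> real" and gd :: "'a \<Rightarrow> 'a"
    and L L0 R :: real and N :: nat and x0 xs :: 'a
    and x y u :: "nat \<Rightarrow> 'a" and A alpha Lk :: "nat \<Rightarrow> real"
  assumes norm: "is_norm nrm"
    and Q: "closed Q" "convex Q"
    and M: "M \<ge> 1"
    and fconv: "\<And>i. i \<in> {1..M} \<Longrightarrow> convex_on Q (f i)"
    and fdiff: "\<And>i x. i \<in> {1..M} \<Longrightarrow> x \<in> Q \<Longrightarrow> (f i has_derivative (\<lambda>v. g i x \<bullet> v)) (at x within Q)"
    and flip: "\<And>i x z. i \<in> {1..M} \<Longrightarrow> x \<in> Q \<Longrightarrow> z \<in> Q \<Longrightarrow>
                 dual_norm nrm (g i x - g i z) \<le> L * nrm (x - z)"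
    and hconv: "convex_on Q h"
    and xs: "xs \<in> Q" "\<And>x. x \<in> Q \<Longrightarrow> obj M f h xs \<le> obj M f h x"
    and prox: "prox_function nrm Q d gd"
    and x0: "x0 \<in> Q"
    and R: "bregman d gd xs x0 \<le> R\<^sup>2"
    and N: "N \<ge> 1"
    and L0: "0 < L0" "L0 \<le> L"
    and run: "mtm_run nrm Q M f g h (bregman d gd) x0 L0 N x y u A alpha Lk"
  shows "obj M f h (x N) - obj M f h xs \<le> 8 * L * R\<^sup>2 / (real N + 1)\<^sup>2"
proof -
  have cQ: "convex Q" using Q(2) .
  have Lpos: "L > 0" using L0 by simp
  have r0: "x 0 = x0" "u 0 = x0" "A 0 = 0" "Lk 0 = L0" using run unfolding mtm_run_def by auto
  have rs: "\<And>k. k < N \<Longrightarrow> \<exists>m::nat.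
        Lk (Suc k) = Lk k / 2 * 2 ^ m \<and>
        mtm_step Q M f g h (bregman d gd) (Lk (Suc k)) (A k) (x k) (u k)
          (alpha (Suc k)) (A (Suc k)) (y (Suc k)) (u (Suc k)) (x (Suc k)) \<and>
        mtm_accept nrm M f g h (Lk (Suc k)) (y (Suc k)) (x (Suc k)) \<and>
        (\<forall>j<m. (\<exists>a A' y' u' x'. mtm_step Q M f g h (bregman d gd) (Lk k / 2 * 2 ^ j) (A k) (x k) (u k) a A' y' u' x') \<and>
               (\<forall>a A' y' u' x'. mtm_step Q M f g h (bregman d gd) (Lk k / 2 * 2 ^ j) (A k) (x k) (u k) a A' y' u' x'
                   \<longrightarrow> \<not> mtm_accept nrm M f g h (Lk k / 2 * 2 ^ j) y' x'))"
    using run unfolding mtm_run_def by blast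
  have inv: "k \<le> N \<Longrightarrow> x k \<in> Q \<and> u k \<in> Q \<and> A k \<ge> 0 \<and> Lk k > 0 \<and> Lk k \<le> 2 * L" for k
  proof (induction k)
    case 0 then show ?case using r0 x0 L0 by auto
  next
    case (Suc k)
    then have kN: "k < N" by simp
    have IH: "x k \<in> Q" "u k \<in> Q" "A k \<ge> 0" "Lk k > 0" "Lk k \<le> 2 * L" using Suc kN by auto
    obtain m where mL: "Lk (Suc k) = Lk k / 2 * 2 ^ m"
      and st: "mtm_step Q M f g h (bregman d gd) (Lk (Suc k)) (A k) (x k) (u k)
          (alpha (Suc k)) (A (Suc k)) (y (Suc k)) (u (Suc k)) (x (Suc k))"
      and tr: "\<forall>j<m. (\<exists>a A' y' u' x'. mtm_step Q M f g h (bregman d gd) (Lk k / 2 * 2 ^ j) (A k) (x k) (u k) a A' y' u' x') \<and>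
               (\<forall>a A' y' u' x'. mtm_step Q M f g h (bregman d gd) (Lk k / 2 * 2 ^ j) (A k) (x k) (u k) a A' y' u' x'
                   \<longrightarrow> \<not> mtm_accept nrm M f g h (Lk k / 2 * 2 ^ j) y' x')"
      using rs[OF kN] by blast
    have Ltp: "Lk (Suc k) > 0" unfolding mL using IH(4) by simp
    note B = step_basic[OF st Ltp IH(3) cQ IH(1,2)]
    have bd: "Lk (Suc k) \<le> 2 * L"
    proof (cases m)
      case 0 then show ?thesis using mL IH(5) Lpos by simp
    next
      case (Suc m')
      define T where "T = Lk k / 2 * 2 ^ m'"
      have Tp: "T > 0" unfolding T_def using IH(4) by simp
      obtain a A' y' u' x' where st': "mtm_step Q M f g h (bregman d gd) T (A k) (x k) (u k) a A' y' u' x'"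
        using tr Suc unfolding T_def by blast
      have nacc: "\<not> mtm_accept nrm M f g h T y' x'" using tr Suc st' unfolding T_def by blast
      note B' = step_basic[OF st' Tp IH(3) cQ IH(1,2)]
      have "T < L"
      proof (rule ccontr)
        assume "\<not> T < L"
        then have "L \<le> T" by simp
        then have "mtm_accept nrm M f g h T y' x'"
          by (intro accept_if[OF norm M cQ _ _ _ _ fdiff flip]) (use B' Lpos in auto)
        then show False using nacc by simp
      qed
      moreover have "Lk (Suc k) = 2 * T" unfolding mL T_def Suc by simp
      ultimately show ?thesis by simp
    qed
    have "A (Suc k) \<ge> 0" using B by simp
    then show ?case using B Ltp bd by auto
  qed
  have stepk: "k < N \<Longrightarrow> mtm_step Q M f g h (bregman d gd) (Lk (Suc k)) (A k) (x k) (u k)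
          (alpha (Suc k)) (A (Suc k)) (y (Suc k)) (u (Suc k)) (x (Suc k)) \<and>
        mtm_accept nrm M f g h (Lk (Suc k)) (y (Suc k)) (x (Suc k))" for k
    using rs by blast
  have lyap: "k \<le> N \<Longrightarrow> A k * obj M f h (x k) + bregman d gd xs (u k) \<le> A k * obj M f h xs + bregman d gd xs x0" for k
  proof (induction k)
    case 0 then show ?case using r0 by simp
  next
    case (Suc k)
    then have kN: "k < N" by simp
    have I: "x k \<in> Q" "u k \<in> Q" "A k \<ge> 0" "Lk (Suc k) > 0" using inv[of k] inv[of "Suc k"] kN by auto
    have st: "mtm_step Q M f g h (bregman d gd) (Lk (Suc k)) (A k) (x k) (u k)
          (alpha (Suc k)) (A (Suc k)) (y (Suc k)) (u (Suc k)) (x (Suc k))"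
      and acc: "mtm_accept nrm M f g h (Lk (Suc k)) (y (Suc k)) (x (Suc k))" using stepk[OF kN] by auto
    have AS: "A (Suc k) = A k + alpha (Suc k)" using step_basic[OF st I(4,3) cQ I(1,2)] by simp
    have "A (Suc k) * obj M f h (x (Suc k)) + bregman d gd xs (u (Suc k))
        \<le> A k * obj M f h (x k) + alpha (Suc k) * obj M f h xs + bregman d gd xs (u k)"
      by (rule step_ineq[OF norm cQ M fconv fdiff hconv xs(1) prox st acc I(4,3,1,2)])
    also have "\<dots> \<le> A k * obj M f h xs + bregman d gd xs x0 + alpha (Suc k) * obj M f h xs"
      using Suc kN by simp
    finally show ?case unfolding AS by (simp add: algebra_simps)
  qed
  have grow: "Suc k \<le> N \<Longrightarrow> A (Suc k) \<ge> (real k + 2)\<^sup>2 / (8 * L)" for k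
  proof (induction k)
    case 0
    have I: "A 0 \<ge> 0" "Lk 1 > 0" "Lk 1 \<le> 2 * L" using inv[of 0] inv[of 1] 0 by auto
    have st: "mtm_step Q M f g h (bregman d gd) (Lk (Suc 0)) (A 0) (x 0) (u 0)
          (alpha (Suc 0)) (A (Suc 0)) (y (Suc 0)) (u (Suc 0)) (x (Suc 0))" using stepk[of 0] 0 by auto
    then have "A (Suc 0) = A 0 + alpha_of (Lk (Suc 0)) (A 0)" unfolding mtm_step_def by simp
    moreover have "A 0 + alpha_of (Lk 1) (A 0) \<ge> (1 + 1)\<^sup>2 / (8 * L)"
      by (rule growth) (use I r0 in auto)
    ultimately show ?case by simp
  next
    case (Suc k)
    then have kN: "Suc k < N" by simp
    have I: "A (Suc k) \<ge> 0" "Lk (Suc (Suc k)) > 0" "Lk (Suc (Suc k)) \<le> 2 * L"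
      using inv[of "Suc k"] inv[of "Suc (Suc k)"] kN by auto
    have IH: "A (Suc k) \<ge> (real k + 2)\<^sup>2 / (8 * L)" using Suc kN by simp
    have st: "mtm_step Q M f g h (bregman d gd) (Lk (Suc (Suc k))) (A (Suc k)) (x (Suc k)) (u (Suc k))
          (alpha (Suc (Suc k))) (A (Suc (Suc k))) (y (Suc (Suc k))) (u (Suc (Suc k))) (x (Suc (Suc k)))"
      using stepk[OF kN] by auto
    then have e: "A (Suc (Suc k)) = A (Suc k) + alpha_of (Lk (Suc (Suc k))) (A (Suc k))" unfolding mtm_step_def by simp
    have "A (Suc k) \<ge> ((real k + 2)\<^sup>2 - 1) / (8 * L)"
      using IH Lpos by (smt (verit) divide_right_mono)
    then have "A (Suc k) + alpha_of (Lk (Suc (Suc k))) (A (Suc k)) \<ge> ((real k + 2) + 1)\<^sup>2 / (8 * L)"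
      by (intro growth) (use I in auto)
    then show ?case unfolding e by (simp add: add.commute add.left_commute)
  qed
  obtain n where Nn: "N = Suc n" using N by (cases N) auto
  have AN: "A N \<ge> (real N + 1)\<^sup>2 / (8 * L)" using grow[of n] Nn by (simp add: add.commute)
  have ANp: "A N > 0" using AN Lpos by (smt (verit) divide_pos_pos zero_less_power2 of_nat_0_le_iff)
  have IN: "u N \<in> Q" using inv[of N] by simp
  have Vp: "bregman d gd xs (u N) \<ge> 0"
    using strong[OF prox cQ xs(1) IN] by (smt (verit) zero_le_power2 divide_nonneg_pos)
  have "A N * (obj M f h (x N) - obj M f h xs) \<le> R\<^sup>2" using lyap[of N] Vp R by (simp add: algebra_simps)
  then have "obj M f h (x N) - obj M f h xs \<le> R\<^sup>2 / A N" using ANp by (simp add: field_simps)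
  also have "\<dots> \<le> R\<^sup>2 / ((real N + 1)\<^sup>2 / (8 * L))"
    by (rule divide_left_mono[OF AN]) (use Lpos ANp in auto)
  also have "\<dots> = 8 * L * R\<^sup>2 / (real N + 1)\<^sup>2" by simp
  finally show ?thesis .
qed

end
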